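(* Let $U_0$ be a unitary operator on a Hilbert space $\mathcal{H}$, let $Y$ be a trace class operator on $\mathcal{H}$, and let $\{Q(t,s)\}_{t,s\in\mathbb{N}}$ be bounded operators with $\sup_{t,s}\|Q(t,s)\|<\infty$. Then for every $\psi\in\mathcal{H}_{\rm ac,0}$ the series below converge absolutely and \begin{enumerate} \item $\lim_{t,s\to\infty}\sum_{k=0}^\infty\langle U_0^{k+t}\psi,\,Y Q(t,s)\,U_0^{k+s}\psi\rangle=0$; \item $\lim_{t,s\to\infty}\sum_{k=0}^\infty\langle U_0^{k+t}\psi,\,Q(t,s) Y\,U_0^{k+s}\psi\rangle=0$. \end{enumerate} (In the paper's notation, these are $\langle\psi,Z_{t,s}(YQ(t,s))\psi\rangle$ and $\langle\psi,Z_{t,s}(Q(t,s)Y)\psi\rangle$ with $Z_{t,s}(A)=\sum_{k\ge0}U_0^{-k-t}AU_0^{k+s}$.)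
   Context: With $E_0$ the spectral measure of $U_0$ on $[0,2\pi)$ ($U_0=\int e^{i\lambda}dE_0(\lambda)$), $\mathcal{H}_{\rm ac,0}$ is the set of vectors $\psi$ in the absolutely continuous subspace of $U_0$ such that $d\|E_0(\lambda)\psi\|^2=G_\psi(\lambda)^2d\lambda$ with $G_\psi\in L^2([0,2\pi))\cap L^\infty([0,2\pi))$. *)

theory Defs
  imports "HOL-Analysis.Analysis"
begin

class complex_inner_space = real_normed_vector +
  fixes scaleC :: "complex \<Rightarrow> 'a \<Rightarrow> 'a" (infixr "*\<^sub>C" 75)
    and cinner :: "'a \<Rightarrow> 'a \<Rightarrow> complex"
  assumes scaleC_add_right: "a *\<^sub>C (x + y) = a *\<^sub>C x + a *\<^sub>C y"
    and scaleC_add_left: "(a + b) *\<^sub>C x = a *\<^sub>C x + b *\<^sub>C x"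
    and scaleC_scaleC: "a *\<^sub>C (b *\<^sub>C x) = (a * b) *\<^sub>C x"
    and scaleC_one: "1 *\<^sub>C x = x"
    and scaleC_of_real: "complex_of_real r *\<^sub>C x = r *\<^sub>R x"
    and cinner_add_right: "cinner x (y + z) = cinner x y + cinner x z"
    and cinner_scaleC_right: "cinner x (a *\<^sub>C y) = a * cinner x y"
    and cinner_commute: "cinner y x = cnj (cinner x y)"
    and cinner_self_norm: "cinner x x = complex_of_real ((norm x)\<^sup>2)"

class chilbert_space = complex_inner_space + complete_space

definition clinear_op :: "('a::complex_inner_space \<Rightarrow> 'a) \<Rightarrow> bool" where
  "clinear_op A \<longleftrightarrow> (\<forall>x y. A (x + y) = A x + A y) \<and> (\<forall>a x. A (a *\<^sub>C x) = a *\<^sub>C A x)"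

definition bounded_op :: "('a::complex_inner_space \<Rightarrow> 'a) \<Rightarrow> bool" where
  "bounded_op A \<longleftrightarrow> clinear_op A \<and> (\<exists>K. \<forall>x. norm (A x) \<le> K * norm x)"

definition unitary_op :: "('a::complex_inner_space \<Rightarrow> 'a) \<Rightarrow> bool" where
  "unitary_op U \<longleftrightarrow> clinear_op U \<and> surj U \<and> (\<forall>x. norm (U x) = norm x)"

text \<open>Trace class operators, via the nuclear representation
  \<open>Y x = \<Sum>n \<langle>a n, x\<rangle> b n\<close> with \<open>\<Sum>n \<parallel>a n\<parallel> \<parallel>b n\<parallel> < \<infinity>\<close>
  (in Hilbert space the nuclear operators are exactly the trace class operators;
  the index set can be taken countable since such operators are compact).\<close>
definition trace_class :: "('a::chilbert_space \<Rightarrow> 'a) \<Rightarrow> bool" where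
  "trace_class Y \<longleftrightarrow> (\<exists>a b :: nat \<Rightarrow> 'a.
      summable (\<lambda>n. norm (a n) * norm (b n)) \<and>
      (\<forall>x. Y x = (\<Sum>n. cinner (a n) x *\<^sub>C b n)))"

text \<open>\<open>\<H>_{ac,0}\<close>: vectors whose spectral measure \<open>d\<parallel>E_0(\<lambda>)\<psi>\<parallel>\<^sup>2\<close> w.r.t. \<open>U\<close>
  (on \<open>[0,2\<pi>)\<close>, with \<open>U = \<integral> e^{i\<lambda>} dE_0\<close>) equals \<open>G(\<lambda>)\<^sup>2 d\<lambda>\<close> with
  \<open>G \<in> L\<^sup>2 \<inter> L\<^sup>\<infinity>\<close>. The spectral measure of \<psi> is the unique finite Borel measure
  on \<open>[0,2\<pi>)\<close> whose moments are \<open>\<langle>\<psi>, U^n \<psi>\<rangle>\<close>, \<open>n \<ge> 0\<close> (negative moments are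
  their conjugates), so the condition is expressed through these moments.\<close>
definition H_ac0 :: "('a::chilbert_space \<Rightarrow> 'a) \<Rightarrow> 'a set" where
  "H_ac0 U = {\<psi>. \<exists>G :: real \<Rightarrow> real.
      G \<in> borel_measurable lborel \<and>
      set_integrable lborel {0..<2*pi} (\<lambda>l. (G l)\<^sup>2) \<and>
      (\<exists>B. AE l in lborel. l \<in> {0..<2*pi} \<longrightarrow> \<bar>G l\<bar> \<le> B) \<and>
      (\<forall>n::nat. cinner \<psi> ((U ^^ n) \<psi>) =
          (LINT l:{0..<2*pi}|lborel. exp (\<i> * of_nat n * of_real l) * of_real ((G l)\<^sup>2)))}"

end

theory Submission
  imports Defs
begin



lemma cinner_add_left: "cinner (x + y) z = cinner x z + cinner y z"
proof -
  have "cinner (x + y) z = cnj (cinner z (x + y))" by (rule cinner_commute)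
  also have "\<dots> = cnj (cinner z x) + cnj (cinner z y)" by (simp add: cinner_add_right)
  also have "cnj (cinner z x) = cinner x z" by (rule cinner_commute[symmetric])
  also have "cnj (cinner z y) = cinner y z" by (rule cinner_commute[symmetric])
  finally show ?thesis .
qed

lemma cinner_scaleC_left: "cinner (a *\<^sub>C x) y = cnj a * cinner x y"
proof -
  have "cinner (a *\<^sub>C x) y = cnj (cinner y (a *\<^sub>C x))" by (rule cinner_commute)
  also have "\<dots> = cnj a * cnj (cinner y x)" by (simp add: cinner_scaleC_right)
  also have "cnj (cinner y x) = cinner x y" by (rule cinner_commute[symmetric])
  finally show ?thesis .
qed

lemma cinner_zero_right[simp]: "cinner x 0 = 0"
proof -
  have "cinner x 0 = cinner x 0 + cinner x 0" using cinner_add_right[of x 0 0] by simp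
  thus ?thesis by simp
qed

lemma cinner_zero_left[simp]: "cinner 0 x = 0"
  using cinner_commute[of 0 x] by simp

lemma cinner_minus_right: "cinner x (- y) = - cinner x y"
proof -
  have "cinner x y + cinner x (- y) = 0" using cinner_add_right[of x y "- y"] by simp
  from minus_unique[OF this] show ?thesis by simp
qed

lemma cinner_minus_left: "cinner (- x) y = - cinner x y"
proof -
  have "cinner (- x) y = cnj (cinner y (- x))" by (rule cinner_commute)
  also have "\<dots> = - cnj (cinner y x)" by (simp add: cinner_minus_right)
  also have "cnj (cinner y x) = cinner x y" by (rule cinner_commute[symmetric])
  finally show ?thesis .
qed

lemma cinner_diff_right: "cinner x (y - z) = cinner x y - cinner x z"
  by (simp only: diff_conv_add_uminus cinner_add_right cinner_minus_right)

lemma cinner_diff_left: "cinner (x - y) z = cinner x z - cinner y z"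
  by (simp only: diff_conv_add_uminus cinner_add_left cinner_minus_left)

lemma cinner_sum_right: "cinner x (sum f A) = (\<Sum>i\<in>A. cinner x (f i))"
  by (induction A rule: infinite_finite_induct) (auto simp: cinner_add_right)

lemma cinner_sum_left: "cinner (sum f A) x = (\<Sum>i\<in>A. cinner (f i) x)"
  by (induction A rule: infinite_finite_induct) (auto simp: cinner_add_left)

lemma cinner_scaleR_right: "cinner x (r *\<^sub>R y) = of_real r * cinner x y"
  using cinner_scaleC_right[of x "complex_of_real r" y] by (simp add: scaleC_of_real)

lemma norm_sq_cinner: "complex_of_real ((norm x)\<^sup>2) = cinner x x"
  by (simp add: cinner_self_norm)

lemma Re_cinner_self: "Re (cinner x x) = (norm x)\<^sup>2"
  by (simp add: cinner_self_norm)

lemma norm_add_sq: "(norm (x + y))\<^sup>2 = (norm x)\<^sup>2 + (norm y)\<^sup>2 + 2 * Re (cinner x y)"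
proof -
  have "cinner (x+y) (x+y) = cinner x x + cinner y y + (cinner x y + cnj (cinner x y))"
    by (simp add: cinner_add_left cinner_add_right algebra_simps flip: cinner_commute)
  hence "Re (cinner (x+y) (x+y)) = Re (cinner x x) + Re (cinner y y) + 2 * Re (cinner x y)"
    by simp
  thus ?thesis by (simp add: Re_cinner_self)
qed

lemma Cauchy_Schwarz: "cmod (cinner x y) \<le> norm x * norm y"
proof (cases "y = 0")
  case True thus ?thesis by simp
next
  case False
  hence ny: "norm y > 0" by simp
  define l where "l = cinner y x / of_real ((norm y)\<^sup>2)"
  have "complex_of_real ((norm (x - l *\<^sub>C y))\<^sup>2) = cinner x x - l * cinner x y - cnj l * cinner y x + cnj l * l * cinner y y"
    unfolding norm_sq_cinner
    by (simp add: cinner_diff_left cinner_diff_right cinner_scaleC_left cinner_scaleC_right algebra_simps)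
  also have "\<dots> = cinner x x - complex_of_real ((cmod (cinner x y))\<^sup>2 / (norm y)\<^sup>2)"
  proof -
    define z where "z = cinner x y"
    define n where "n = complex_of_real ((norm y)\<^sup>2)"
    have n0: "n \<noteq> 0" using ny unfolding n_def by simp
    have cz: "cinner y x = cnj z" unfolding z_def by (rule cinner_commute)
    have cyy: "cinner y y = n" unfolding n_def by (rule cinner_self_norm)
    have cnjn: "cnj n = n" unfolding n_def by simp
    have ll: "l = cnj z / n" unfolding l_def z_def n_def by (simp add: cinner_commute[of y x])
    have cl: "cnj l = z / n" unfolding ll using cnjn by simp
    have zz: "z * cnj z = complex_of_real ((cmod z)\<^sup>2)"
      using complex_norm_square[of z] by (simp only: of_real_power)
    have "cinner x x - l * cinner x y - cnj l * cinner y x + cnj l * l * cinner y y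
        = cinner x x - (z * cnj z) / n"
      unfolding cz cyy cl ll z_def[symmetric] using n0
      by (simp add: field_simps)
    also have "\<dots> = cinner x x - complex_of_real ((cmod (cinner x y))\<^sup>2 / (norm y)\<^sup>2)"
      unfolding z_def[symmetric] zz n_def by (simp only: of_real_divide)
    finally show ?thesis .
  qed
  finally have e: "complex_of_real ((norm (x - l *\<^sub>C y))\<^sup>2) = cinner x x - complex_of_real ((cmod (cinner x y))\<^sup>2 / (norm y)\<^sup>2)" .
  have "(norm (x - l *\<^sub>C y))\<^sup>2 = Re (cinner x x) - (cmod (cinner x y))\<^sup>2 / (norm y)\<^sup>2"
    using arg_cong[OF e, of Re] by (simp only: Re_complex_of_real minus_complex.sel)
  hence "cmod (cinner x y) ^ 2 / (norm y)\<^sup>2 \<le> (norm x)\<^sup>2"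
    unfolding Re_cinner_self by (metis diff_ge_0_iff_ge zero_le_power2)
  hence "cmod (cinner x y) ^ 2 \<le> (norm x * norm y)\<^sup>2"
    using ny by (simp add: field_simps power_mult_distrib)
  thus ?thesis by (meson norm_ge_zero power2_le_imp_le zero_le_mult_iff)
qed

lemma bounded_linear_cinner_right: "bounded_linear (\<lambda>y. cinner x y)"
  apply (rule bounded_linear_intro[where K="norm x"])
  apply (simp add: cinner_add_right)
  apply (simp add: cinner_scaleR_right scaleR_conv_of_real)
  by (metis Cauchy_Schwarz mult.commute)



lemma clinear_opD:
  assumes "clinear_op A"
  shows "A (x + y) = A x + A y" "A (a *\<^sub>C x) = a *\<^sub>C A x"
  using assms unfolding clinear_op_def by auto

lemma clinear_op_scaleR:
  assumes "clinear_op A" shows "A (r *\<^sub>R x) = r *\<^sub>R A x"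
  by (metis assms clinear_opD(2) scaleC_of_real)

lemma clinear_op_bounded_linear:
  assumes "clinear_op A" "\<forall>x. norm (A x) \<le> C * norm x"
  shows "bounded_linear A"
  apply (rule bounded_linear_intro[where K=C])
  using clinear_opD(1)[OF assms(1)] apply blast
  using clinear_op_scaleR[OF assms(1)] apply blast
  using assms(2) by (simp add: mult.commute)

lemma clinear_op_sum:
  assumes "clinear_op A" shows "A (sum f I) = (\<Sum>i\<in>I. A (f i))"
proof -
  have "linear A" using clinear_op_bounded_linear[of A] assms
    by (simp add: clinear_opD(1) clinear_op_scaleR linearI)
  thus ?thesis by (simp add: linear_sum)
qed

lemma clinear_op_funpow:
  assumes "clinear_op U" shows "clinear_op (U ^^ n)"
  using assms by (induction n) (auto simp: clinear_op_def)

lemma isometry_funpow: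
  fixes U :: "'a::real_normed_vector \<Rightarrow> 'a"
  assumes "\<forall>x. norm (U x) = norm x" shows "norm ((U ^^ n) x) = norm x"
proof (induction n)
  case 0 show ?case by simp
next
  case (Suc n)
  have "norm ((U ^^ Suc n) x) = norm (U ((U ^^ n) x))" by simp
  also have "\<dots> = norm ((U ^^ n) x)" using assms by blast
  finally show ?case using Suc by simp
qed

lemma isometry_cinner:
  fixes U :: "'a::complex_inner_space \<Rightarrow> 'a"
  assumes lin: "clinear_op U" and iso: "\<forall>x. norm (U x) = norm x"
  shows "cinner (U x) (U y) = cinner x y"
proof -
  have re: "Re (cinner (U x) (U y)) = Re (cinner x y)" for x y
  proof -
    have a: "norm (U x + U y) = norm (x + y)"
      using iso clinear_opD(1)[OF lin, of x y] by metis
    have b: "norm (U x) = norm x" "norm (U y) = norm y" using iso by blast+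
    have c: "(norm (x + y))\<^sup>2 = (norm x)\<^sup>2 + (norm y)\<^sup>2 + 2 * Re (cinner (U x) (U y))"
      using norm_add_sq[of "U x" "U y"] unfolding a b .
    show ?thesis
      using c norm_add_sq[of x y] by linarith
  qed
  have im: "Im z = - Re (\<i> * z)" for z :: complex by simp
  have "Im (cinner (U x) (U y)) = Im (cinner x y)"
    using re[of x "\<i> *\<^sub>C y"] clinear_opD(2)[OF lin, of \<i> y]
    by (simp add: cinner_scaleC_right)
  with re show ?thesis by (simp add: complex_eq_iff)
qed

lemma isometry_funpow_cinner:
  fixes U :: "'a::complex_inner_space \<Rightarrow> 'a"
  assumes lin: "clinear_op U" and iso: "\<forall>x. norm (U x) = norm x"
  shows "cinner ((U ^^ n) x) ((U ^^ n) y) = cinner x y"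
  using isometry_cinner[OF clinear_op_funpow[OF lin] ] isometry_funpow[OF iso] by blast

lemma funpow_cinner_shift:
  fixes U :: "'a::complex_inner_space \<Rightarrow> 'a"
  assumes lin: "clinear_op U" and iso: "\<forall>x. norm (U x) = norm x" and "j \<le> k"
  shows "cinner ((U ^^ j) x) ((U ^^ k) x) = cinner x ((U ^^ (k - j)) x)"
proof -
  have "(U ^^ k) x = (U ^^ j) ((U ^^ (k - j)) x)"
    using assms(3) by (metis funpow_add le_add_diff_inverse o_apply)
  thus ?thesis using isometry_funpow_cinner[OF lin iso] by simp
qed



lemma Ico_to_Icc_integral:
  fixes f :: "real \<Rightarrow> 'b::{banach, second_countable_topology}"
  shows "(LINT l:{0..<2*pi}|lborel. f l) = (LBINT l=ereal 0..ereal (2*pi). f l)"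
  apply (subst interval_integral_Icc[of 0 "2*pi"], simp)
  by (rule set_integral_discrete_difference[where X="{2*pi}"]) auto

lemma ortho:
  fixes d :: int
  shows "(LINT l:{0..<2*pi}|lborel. exp (\<i> * of_int d * of_real l)) = (if d = 0 then 2*pi else 0)"
proof (cases "d = 0")
  case True
  have "(LBINT l=ereal 0..ereal (2*pi). (1::complex)) = of_real (2*pi) - of_real 0"
    apply (rule interval_integral_FTC_finite[where F="\<lambda>x. of_real x" and a=0 and b="2*pi"])
    apply (auto intro!: continuous_intros)
    apply (rule has_vector_derivative_real_field)
    apply (auto intro!: derivative_eq_intros)
    done
  thus ?thesis using True by (simp add: Ico_to_Icc_integral)
next
  case False
  define F where "F = (\<lambda>z::complex. exp (\<i> * of_int d * z) / (\<i> * of_int d))"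
  have "(LBINT l=ereal 0..ereal (2*pi). exp (\<i> * of_int d * of_real l)) = F (of_real (2*pi)) - F (of_real 0)"
    apply (rule interval_integral_FTC_finite[where F="\<lambda>x. F (of_real x)" and a=0 and b="2*pi"])
    apply (auto intro!: continuous_intros)
    apply (rule has_vector_derivative_real_field)
    unfolding F_def using False
    apply (auto intro!: derivative_eq_intros)
    done
  also have "\<dots> = 0"
  proof -
    have "exp (\<i> * of_int d * of_real (2*pi)) = exp ((2 * of_int d * pi) * \<i>)"
      by (simp add: algebra_simps)
    also have "\<dots> = 1" by (rule exp_integer_2pi) simp
    finally show ?thesis unfolding F_def by simp
  qed
  finally show ?thesis using False by (simp add: Ico_to_Icc_integral)
qed



lemma exp_cnj_mult:
  "cnj (exp (\<i> * of_nat j * of_real l)) * exp (\<i> * of_nat k * of_real l)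
     = exp (\<i> * of_int (int k - int j) * of_real l)"
  by (simp add: exp_cnj algebra_simps flip: exp_add)

lemma weight_integrable:
  fixes w :: "real \<Rightarrow> real" and h :: "real \<Rightarrow> complex"
  assumes wm: "w \<in> borel_measurable lborel" and wi: "set_integrable lborel {0..<2*pi} w"
    and hc: "continuous_on UNIV h" and hb: "\<And>l. cmod (h l) \<le> M"
  shows "integrable lborel (\<lambda>l. indicator {0..<2*pi} l *\<^sub>R (h l * of_real (w l)))"
proof -
  have M0: "M \<ge> 0" using hb[of 0] norm_ge_zero order_trans by blast
  have i1: "integrable lborel (\<lambda>l. indicator {0..<2*pi} l *\<^sub>R (M * w l))"
    using integrable_mult_right[OF wi[unfolded set_integrable_def], of M]
    by (simp add: mult.left_commute)
  have hm: "h \<in> borel_measurable lborel"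
    using hc by (simp add: borel_measurable_continuous_onI)
  have wc: "(\<lambda>x. complex_of_real (w x)) \<in> borel_measurable lborel"
    using measurable_compose[OF wm borel_measurable_of_real] by (simp add: o_def)
  have m: "(\<lambda>l. indicator {0..<2*pi} l *\<^sub>R (h l * of_real (w l))) \<in> borel_measurable lborel"
    by (intro borel_measurable_scaleR borel_measurable_times borel_measurable_indicator hm
        wc) simp
  have b: "norm (indicator {0..<2*pi} l *\<^sub>R (h l * of_real (w l))) \<le> norm (indicator {0..<2*pi} l *\<^sub>R (M * w l))" for l
  proof -
    have "cmod (h l) * \<bar>w l\<bar> \<le> M * \<bar>w l\<bar>" by (rule mult_right_mono[OF hb]) simp
    thus ?thesis by (simp add: indicator_def norm_mult abs_mult M0)
  qed
  show ?thesis
    by (rule Bochner_Integration.integrable_bound[OF i1 m AE_I2[OF b]])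
qed
lemma cmod_exp_i: "cmod (exp (\<i> * of_int d * of_real l)) = 1"
  by (simp add: norm_exp_eq_Re)

lemma cnorm_sq: "complex_of_real ((cmod z)\<^sup>2) = cnj z * z"
  using complex_norm_square[of z] by (simp add: mult.commute)

lemma weight_quad:
  fixes w :: "real \<Rightarrow> real" and c :: "nat \<Rightarrow> complex"
  assumes wm: "w \<in> borel_measurable lborel" and wi: "set_integrable lborel {0..<2*pi} w"
  shows "(\<Sum>j<K. \<Sum>k<K. cnj (c j) * c k *
            (LINT l:{0..<2*pi}|lborel. exp (\<i> * of_int (int k - int j) * of_real l) * of_real (w l)))
       = of_real (LINT l:{0..<2*pi}|lborel. (cmod (\<Sum>k<K. c k * exp (\<i> * of_nat k * of_real l)))\<^sup>2 * w l)"
proof -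
  let ?A = "{0..<2*pi}"
  let ?e = "\<lambda>d l. exp (\<i> * of_int d * of_real l)"
  let ?p = "\<lambda>l. \<Sum>k<K. c k * exp (\<i> * of_nat k * of_real l)"
  have int: "integrable lborel (\<lambda>l. indicator ?A l *\<^sub>R (?e d l * of_real (w l)))" for d
  proof -
    have "continuous_on UNIV (\<lambda>l::real. exp (\<i> * of_int d * of_real l))"
      by (intro continuous_intros)
    moreover have "cmod (exp (\<i> * of_int d * of_real l)) \<le> 1" for l
      by (simp add: cmod_exp_i)
    ultimately show ?thesis by (rule weight_integrable[OF wm wi])
  qed
  have pw: "(\<Sum>j<K. \<Sum>k<K. cnj (c j) * c k * (indicator ?A l *\<^sub>R (?e (int k - int j) l * of_real (w l))))
      = complex_of_real (indicator ?A l *\<^sub>R ((cmod (?p l))\<^sup>2 * w l))" for l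
  proof -
    have "complex_of_real ((cmod (?p l))\<^sup>2) = cnj (?p l) * ?p l"
      by (rule cnorm_sq)
    also have "\<dots> = (\<Sum>j<K. \<Sum>k<K. cnj (c j * exp (\<i> * of_nat j * of_real l)) * (c k * exp (\<i> * of_nat k * of_real l)))"
      by (simp only: cnj_sum sum_product)
    also have "\<dots> = (\<Sum>j<K. \<Sum>k<K. cnj (c j) * c k * ?e (int k - int j) l)"
    proof (intro sum.cong refl)
      fix j k
      show "cnj (c j * exp (\<i> * of_nat j * of_real l)) * (c k * exp (\<i> * of_nat k * of_real l))
          = cnj (c j) * c k * ?e (int k - int j) l"
        unfolding exp_cnj_mult[symmetric] complex_cnj_mult by (simp only: ac_simps)
    qed
    finally have "complex_of_real ((cmod (?p l))\<^sup>2) = (\<Sum>j<K. \<Sum>k<K. cnj (c j) * c k * ?e (int k - int j) l)" .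
    thus ?thesis
      by (simp add: scaleR_conv_of_real sum_distrib_left sum_distrib_right algebra_simps)
  qed
  have "(\<Sum>j<K. \<Sum>k<K. cnj (c j) * c k * (LINT l:?A|lborel. ?e (int k - int j) l * of_real (w l)))
     = (\<Sum>j<K. \<Sum>k<K. integral\<^sup>L lborel (\<lambda>l. cnj (c j) * c k * (indicator ?A l *\<^sub>R (?e (int k - int j) l * of_real (w l)))))"
    unfolding set_lebesgue_integral_def by (simp only: integral_mult_right_zero)
  also have "\<dots> = integral\<^sup>L lborel (\<lambda>l. \<Sum>j<K. \<Sum>k<K. cnj (c j) * c k * (indicator ?A l *\<^sub>R (?e (int k - int j) l * of_real (w l))))"
  proof -
    have i2: "integrable lborel (\<lambda>l. cnj (c j) * c k * (indicator ?A l *\<^sub>R (?e (int k - int j) l * of_real (w l))))" for j k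
      by (rule integrable_mult_right) (rule int)
    have s1: "integral\<^sup>L lborel (\<lambda>l. \<Sum>k<K. cnj (c j) * c k * (indicator ?A l *\<^sub>R (?e (int k - int j) l * of_real (w l))))
        = (\<Sum>k<K. integral\<^sup>L lborel (\<lambda>l. cnj (c j) * c k * (indicator ?A l *\<^sub>R (?e (int k - int j) l * of_real (w l)))))" for j
      by (rule Bochner_Integration.integral_sum) (rule i2)
    have s2: "integral\<^sup>L lborel (\<lambda>l. \<Sum>j<K. \<Sum>k<K. cnj (c j) * c k * (indicator ?A l *\<^sub>R (?e (int k - int j) l * of_real (w l))))
        = (\<Sum>j<K. integral\<^sup>L lborel (\<lambda>l. \<Sum>k<K. cnj (c j) * c k * (indicator ?A l *\<^sub>R (?e (int k - int j) l * of_real (w l)))))"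
      by (rule Bochner_Integration.integral_sum) (rule Bochner_Integration.integrable_sum, rule i2)
    show ?thesis unfolding s2 s1 ..
  qed
  also have "\<dots> = integral\<^sup>L lborel (\<lambda>l. complex_of_real (indicator ?A l *\<^sub>R ((cmod (?p l))\<^sup>2 * w l)))"
    by (simp only: pw)
  also have "\<dots> = of_real (LINT l:?A|lborel. (cmod (?p l))\<^sup>2 * w l)"
    unfolding set_lebesgue_integral_def by (rule integral_complex_of_real)
  finally show ?thesis .
qed

lemma weight_integrable_real:
  fixes w :: "real \<Rightarrow> real" and h :: "real \<Rightarrow> real"
  assumes wm: "w \<in> borel_measurable lborel" and wi: "set_integrable lborel {0..<2*pi} w"
    and hc: "continuous_on UNIV h" and hb: "\<And>l. \<bar>h l\<bar> \<le> M"
  shows "set_integrable lborel {0..<2*pi} (\<lambda>l. h l * w l)"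
proof -
  have M0: "M \<ge> 0" using hb[of 0] abs_ge_zero order_trans by blast
  have i1: "integrable lborel (\<lambda>l. indicator {0..<2*pi} l *\<^sub>R (M * w l))"
    using integrable_mult_right[OF wi[unfolded set_integrable_def], of M]
    by (simp add: mult.left_commute)
  have hm: "h \<in> borel_measurable lborel"
    using hc by (simp add: borel_measurable_continuous_onI)
  have m: "(\<lambda>l. indicator {0..<2*pi} l *\<^sub>R (h l * w l)) \<in> borel_measurable lborel"
    by (intro borel_measurable_scaleR borel_measurable_times borel_measurable_indicator hm wm) simp
  have b: "norm (indicator {0..<2*pi} l *\<^sub>R (h l * w l)) \<le> norm (indicator {0..<2*pi} l *\<^sub>R (M * w l))" for l
  proof -
    have "\<bar>h l\<bar> * \<bar>w l\<bar> \<le> M * \<bar>w l\<bar>" by (rule mult_right_mono[OF hb]) simp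
    thus ?thesis by (simp add: indicator_def abs_mult M0)
  qed
  show ?thesis unfolding set_integrable_def
    by (rule Bochner_Integration.integrable_bound[OF i1 m AE_I2[OF b]])
qed

lemma spectral_bound:
  fixes G :: "real \<Rightarrow> real" and c :: "nat \<Rightarrow> complex"
  assumes Gm: "G \<in> borel_measurable lborel"
    and Gi: "set_integrable lborel {0..<2*pi} (\<lambda>l. (G l)\<^sup>2)"
    and Gb: "AE l in lborel. l \<in> {0..<2*pi} \<longrightarrow> \<bar>G l\<bar> \<le> B"
  shows "Re (\<Sum>j<K. \<Sum>k<K. cnj (c j) * c k *
            (LINT l:{0..<2*pi}|lborel. exp (\<i> * of_int (int k - int j) * of_real l) * of_real ((G l)\<^sup>2)))
       \<le> 2 * pi * B\<^sup>2 * (\<Sum>k<K. (cmod (c k))\<^sup>2)"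
proof -
  let ?A = "{0..<2*pi}"
  let ?p = "\<lambda>l. \<Sum>k<K. c k * exp (\<i> * of_nat k * of_real l)"
  define S where "S = (\<Sum>k<K. cmod (c k))"
  have pb: "\<bar>(cmod (?p l))\<^sup>2\<bar> \<le> S\<^sup>2" for l
  proof -
    have "cmod (?p l) \<le> (\<Sum>k<K. cmod (c k * exp (\<i> * of_nat k * of_real l)))"
      by (rule norm_sum)
    also have "\<dots> = S" unfolding S_def
      by (simp add: norm_mult)
    finally show ?thesis by (simp add: power_mono)
  qed
  have pc: "continuous_on UNIV (\<lambda>l. (cmod (?p l))\<^sup>2)"
    by (auto intro!: continuous_intros)
  have G2m: "(\<lambda>l. (G l)\<^sup>2) \<in> borel_measurable lborel" using Gm by measurable
  have Bi: "set_integrable lborel ?A (\<lambda>l. B\<^sup>2)"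
    unfolding set_integrable_def by (rule integrable_indicator) auto
  have h1: "Re (\<Sum>j<K. \<Sum>k<K. cnj (c j) * c k *
            (LINT l:?A|lborel. exp (\<i> * of_int (int k - int j) * of_real l) * of_real ((G l)\<^sup>2)))
      = (LINT l:?A|lborel. (cmod (?p l))\<^sup>2 * (G l)\<^sup>2)"
    by (subst weight_quad[OF G2m Gi]) simp
  have h2: "(LINT l:?A|lborel. (cmod (?p l))\<^sup>2 * (G l)\<^sup>2) \<le> (LINT l:?A|lborel. (cmod (?p l))\<^sup>2 * B\<^sup>2)"
    apply (rule set_integral_mono_AE)
      apply (rule weight_integrable_real[OF G2m Gi pc pb])
     apply (rule weight_integrable_real[OF _ Bi pc pb], simp)
    using Gb apply eventually_elim
    apply (intro impI mult_left_mono)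
    subgoal for l
      using abs_le_square_iff[of "G l" B] by auto
    by simp
  have "complex_of_real (LINT l:?A|lborel. (cmod (?p l))\<^sup>2 * B\<^sup>2) = (\<Sum>j<K. \<Sum>k<K. cnj (c j) * c k *
            (LINT l:?A|lborel. exp (\<i> * of_int (int k - int j) * of_real l) * of_real (B\<^sup>2)))"
    by (subst weight_quad[OF _ Bi]) simp_all
  also have "\<dots> = (\<Sum>j<K. \<Sum>k<K. cnj (c j) * c k * (complex_of_real (B\<^sup>2) * complex_of_real (if int k - int j = 0 then 2*pi else 0)))"
  proof (intro sum.cong refl)
    fix j k
    have "(LINT l:?A|lborel. exp (\<i> * of_int (int k - int j) * of_real l) * of_real (B\<^sup>2))
        = (LINT l:?A|lborel. exp (\<i> * of_int (int k - int j) * of_real l)) * of_real (B\<^sup>2)"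
      unfolding set_lebesgue_integral_def by (simp only: mult_scaleR_left[symmetric] integral_mult_left_zero)
    also have "\<dots> = complex_of_real (B\<^sup>2) * complex_of_real (if int k - int j = 0 then 2*pi else 0)"
      by (subst ortho) (rule mult.commute)
    finally show "cnj (c j) * c k * (LINT l:?A|lborel. exp (\<i> * of_int (int k - int j) * of_real l) * of_real (B\<^sup>2))
        = cnj (c j) * c k * (complex_of_real (B\<^sup>2) * complex_of_real (if int k - int j = 0 then 2*pi else 0))" by simp
  qed
  also have "\<dots> = (\<Sum>j<K. cnj (c j) * c j * of_real (B\<^sup>2 * 2 * pi))"
    apply (rule sum.cong[OF refl])
    apply (simp add: if_distrib cong: if_cong)
    done
  also have "\<dots> = complex_of_real (2 * pi * B\<^sup>2 * (\<Sum>k<K. (cmod (c k))\<^sup>2))"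
  proof -
    have "(\<Sum>j<K. cnj (c j) * c j * of_real (B\<^sup>2 * 2 * pi)) = (\<Sum>j<K. complex_of_real ((cmod (c j))\<^sup>2 * (B\<^sup>2 * 2 * pi)))"
      by (simp only: cnorm_sq of_real_mult)
    also have "\<dots> = complex_of_real (2 * pi * B\<^sup>2 * (\<Sum>k<K. (cmod (c k))\<^sup>2))"
      by (simp only: of_real_sum[symmetric] sum_distrib_left sum_distrib_right ac_simps)
    finally show ?thesis .
  qed
  finally have "(LINT l:?A|lborel. (cmod (?p l))\<^sup>2 * B\<^sup>2) = 2 * pi * B\<^sup>2 * (\<Sum>k<K. (cmod (c k))\<^sup>2)"
    using of_real_eq_iff by blast
  with h1 h2 show ?thesis by (simp only:)
qed



lemma cnj_set_integral_exp:
  fixes w :: "real \<Rightarrow> real"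
  shows "cnj (LINT l:{0..<2*pi}|lborel. exp (\<i> * of_int d * of_real l) * of_real (w l))
       = (LINT l:{0..<2*pi}|lborel. exp (\<i> * of_int (- d) * of_real l) * of_real (w l))"
  unfolding set_lebesgue_integral_def
  apply (subst Bochner_Integration.integral_cnj[symmetric])
  apply (rule Bochner_Integration.integral_cong[OF refl])
  by (simp add: exp_cnj scaleR_conv_of_real)

lemma moments:
  fixes U :: "'a::chilbert_space \<Rightarrow> 'a"
  assumes lin: "clinear_op U" and iso: "\<forall>x. norm (U x) = norm x"
    and mom: "\<forall>n::nat. cinner \<psi> ((U ^^ n) \<psi>) =
          (LINT l:{0..<2*pi}|lborel. exp (\<i> * of_nat n * of_real l) * of_real ((G l)\<^sup>2))"
  shows "cinner ((U ^^ j) \<psi>) ((U ^^ k) \<psi>) =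
          (LINT l:{0..<2*pi}|lborel. exp (\<i> * of_int (int k - int j) * of_real l) * of_real ((G l)\<^sup>2))"
proof (cases "j \<le> k")
  case True
  have "cinner ((U ^^ j) \<psi>) ((U ^^ k) \<psi>) = cinner \<psi> ((U ^^ (k - j)) \<psi>)"
    by (rule funpow_cinner_shift[OF lin iso True])
  also have "\<dots> = (LINT l:{0..<2*pi}|lborel. exp (\<i> * of_nat (k - j) * of_real l) * of_real ((G l)\<^sup>2))"
    using mom by blast
  also have "(of_nat (k - j) :: complex) = of_int (int k - int j)"
    using True by (metis of_int_of_nat_eq of_nat_diff)
  finally show ?thesis .
next
  case False
  have "cinner ((U ^^ j) \<psi>) ((U ^^ k) \<psi>) = cnj (cinner ((U ^^ k) \<psi>) ((U ^^ j) \<psi>))"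
    by (rule cinner_commute)
  also have "cinner ((U ^^ k) \<psi>) ((U ^^ j) \<psi>) = cinner \<psi> ((U ^^ (j - k)) \<psi>)"
    using False by (intro funpow_cinner_shift[OF lin iso]) simp
  also have "\<dots> = (LINT l:{0..<2*pi}|lborel. exp (\<i> * of_nat (j - k) * of_real l) * of_real ((G l)\<^sup>2))"
    using mom by blast
  also have "(of_nat (j - k) :: complex) = of_int (int j - int k)"
    using False by (metis le_cases of_int_of_nat_eq of_nat_diff)
  also have "cnj (LINT l:{0..<2*pi}|lborel. exp (\<i> * of_int (int j - int k) * of_real l) * of_real ((G l)\<^sup>2))
     = (LINT l:{0..<2*pi}|lborel. exp (\<i> * of_int (- (int j - int k)) * of_real l) * of_real ((G l)\<^sup>2))"
    by (rule cnj_set_integral_exp)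
  finally show ?thesis by simp
qed

lemma ac_bound:
  fixes U :: "'a::chilbert_space \<Rightarrow> 'a"
  assumes lin: "clinear_op U" and iso: "\<forall>x. norm (U x) = norm x" and psi: "\<psi> \<in> H_ac0 U"
  shows "\<exists>M2\<ge>0. \<forall>c K. (norm (\<Sum>k<K. c k *\<^sub>C (U ^^ k) \<psi>))\<^sup>2 \<le> M2 * (\<Sum>k<K. (cmod (c k))\<^sup>2)"
proof -
  obtain G B where Gm: "G \<in> borel_measurable lborel"
    and Gi: "set_integrable lborel {0..<2*pi} (\<lambda>l. (G l)\<^sup>2)"
    and Gb: "AE l in lborel. l \<in> {0..<2*pi} \<longrightarrow> \<bar>G l\<bar> \<le> B"
    and mom: "\<forall>n::nat. cinner \<psi> ((U ^^ n) \<psi>) =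
          (LINT l:{0..<2*pi}|lborel. exp (\<i> * of_nat n * of_real l) * of_real ((G l)\<^sup>2))"
    using psi unfolding H_ac0_def by blast
  show ?thesis
  proof (intro exI[of _ "2 * pi * B\<^sup>2"] conjI allI)
    show "0 \<le> 2 * pi * B\<^sup>2" by simp
    fix c K
    have "complex_of_real ((norm (\<Sum>k<K. c k *\<^sub>C (U ^^ k) \<psi>))\<^sup>2)
        = (\<Sum>j<K. \<Sum>k<K. cnj (c j) * c k * cinner ((U ^^ j) \<psi>) ((U ^^ k) \<psi>))"
      unfolding norm_sq_cinner by (simp add: cinner_sum_left cinner_sum_right cinner_scaleC_left
          cinner_scaleC_right sum_distrib_left mult.assoc) (subst sum.swap, simp add: ac_simps)
    also have "\<dots> = (\<Sum>j<K. \<Sum>k<K. cnj (c j) * c k *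
            (LINT l:{0..<2*pi}|lborel. exp (\<i> * of_int (int k - int j) * of_real l) * of_real ((G l)\<^sup>2)))"
      by (simp add: moments[OF lin iso mom])
    finally have "(norm (\<Sum>k<K. c k *\<^sub>C (U ^^ k) \<psi>))\<^sup>2 = Re (\<Sum>j<K. \<Sum>k<K. cnj (c j) * c k *
            (LINT l:{0..<2*pi}|lborel. exp (\<i> * of_int (int k - int j) * of_real l) * of_real ((G l)\<^sup>2)))"
      by (metis Re_complex_of_real)
    also have "\<dots> \<le> 2 * pi * B\<^sup>2 * (\<Sum>k<K. (cmod (c k))\<^sup>2)"
      by (rule spectral_bound[OF Gm Gi Gb])
    finally show "(norm (\<Sum>k<K. c k *\<^sub>C (U ^^ k) \<psi>))\<^sup>2 \<le> 2 * pi * B\<^sup>2 * (\<Sum>k<K. (cmod (c k))\<^sup>2)" .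
  qed
qed



instance chilbert_space \<subseteq> banach ..

lemma norm_scaleC: "norm (a *\<^sub>C (x::'a::complex_inner_space)) = cmod a * norm x"
proof -
  have "complex_of_real ((norm (a *\<^sub>C x))\<^sup>2) = cinner (a *\<^sub>C x) (a *\<^sub>C x)" by (rule norm_sq_cinner)
  also have "\<dots> = cnj a * a * cinner x x"
    by (simp only: cinner_scaleC_left cinner_scaleC_right ac_simps)
  also have "\<dots> = complex_of_real ((cmod a)\<^sup>2) * complex_of_real ((norm x)\<^sup>2)"
    by (simp only: cnorm_sq cinner_self_norm)
  also have "\<dots> = complex_of_real ((cmod a * norm x)\<^sup>2)"
    by (simp only: of_real_mult power_mult_distrib)
  finally have "(norm (a *\<^sub>C x))\<^sup>2 = (cmod a * norm x)\<^sup>2" using of_real_eq_iff by blast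
  thus ?thesis by (simp add: power2_eq_iff_nonneg)
qed

lemma sq_bound:
  fixes U Q :: "'a::chilbert_space \<Rightarrow> 'a"
  assumes ac: "\<forall>c K. (norm (\<Sum>k<K. c k *\<^sub>C (U ^^ k) \<psi>))\<^sup>2 \<le> M2 * (\<Sum>k<K. (cmod (c k))\<^sup>2)"
    and M2: "M2 \<ge> 0"
    and Ql: "clinear_op Q" and Qb: "\<forall>x. norm (Q x) \<le> C * norm x"
  shows "(\<Sum>k<K. (cmod (cinner z (Q ((U ^^ k) \<psi>))))\<^sup>2) \<le> C\<^sup>2 * M2 * (norm z)\<^sup>2"
proof -
  define w where "w k = cinner z (Q ((U ^^ k) \<psi>))" for k
  define X where "X = (\<Sum>k<K. (cmod (w k))\<^sup>2)"
  define v where "v = (\<Sum>k<K. cnj (w k) *\<^sub>C (U ^^ k) \<psi>)"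
  have X0: "X \<ge> 0" unfolding X_def by (simp add: sum_nonneg)
  have "cinner z (Q v) = (\<Sum>k<K. cnj (w k) * w k)"
    unfolding v_def by (simp add: clinear_op_sum[OF Ql] clinear_opD(2)[OF Ql] cinner_sum_right
        cinner_scaleC_right w_def)
  also have "\<dots> = of_real X" unfolding X_def
    by (simp only: of_real_sum cnorm_sq)
  finally have eq: "cinner z (Q v) = of_real X" .
  have "X \<le> cmod (cinner z (Q v))" using eq X0 by simp
  also have "\<dots> \<le> norm z * norm (Q v)" by (rule Cauchy_Schwarz)
  also have "\<dots> \<le> norm z * (C * norm v)" using Qb by (simp add: mult_left_mono)
  finally have X1: "X \<le> norm z * C * norm v" by (simp add: mult.assoc)
  have nv: "(norm v)\<^sup>2 \<le> M2 * X"
    unfolding v_def X_def using ac[rule_format, of "\<lambda>k. cnj (w k)" K] by (simp only: complex_mod_cnj)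
  show ?thesis
  proof (cases "norm z * C \<le> 0")
    case True
    hence "X \<le> 0" using X1 by (metis mult_nonpos_nonneg norm_ge_zero order.trans)
    hence "X = 0" using X0 by simp
    thus ?thesis unfolding X_def[symmetric] w_def[symmetric] using M2 by simp
  next
    case False
    have "X\<^sup>2 \<le> (norm z * C * norm v)\<^sup>2" using X1 X0 by (simp add: power_mono)
    also have "\<dots> = (norm z * C)\<^sup>2 * (norm v)\<^sup>2" by (simp add: power_mult_distrib)
    also have "\<dots> \<le> (norm z * C)\<^sup>2 * (M2 * X)" by (rule mult_left_mono[OF nv]) simp
    finally have "X * X \<le> ((norm z)\<^sup>2 * C\<^sup>2 * M2) * X" by (simp add: power2_eq_square algebra_simps)
    hence "X \<le> (norm z)\<^sup>2 * C\<^sup>2 * M2"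
      using X0 M2 by (cases "X = 0") (auto simp: mult_le_cancel_right)
    thus ?thesis unfolding X_def w_def by (simp add: algebra_simps)
  qed
qed

lemma sum_shift_le:
  fixes f :: "nat \<Rightarrow> real"
  assumes "\<And>k. f k \<ge> 0"
  shows "(\<Sum>k<K. f (k + s)) \<le> (\<Sum>k<K + s. f k)"
proof -
  have "(\<Sum>k<K. f (k + s)) = (\<Sum>k\<in>{s..<K+s}. f k)"
    by (rule sum.reindex_bij_witness[where i="\<lambda>k. k - s" and j="\<lambda>k. k + s"]) auto
  also have "\<dots> \<le> (\<Sum>k<K + s. f k)"
    by (rule sum_mono2) (auto simp: assms)
  finally show ?thesis .
qed

lemma sq_bound_shift:
  fixes U Q :: "'a::chilbert_space \<Rightarrow> 'a"
  assumes ac: "\<forall>c K. (norm (\<Sum>k<K. c k *\<^sub>C (U ^^ k) \<psi>))\<^sup>2 \<le> M2 * (\<Sum>k<K. (cmod (c k))\<^sup>2)"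
    and M2: "M2 \<ge> 0"
    and Ql: "clinear_op Q" and Qb: "\<forall>x. norm (Q x) \<le> C * norm x"
  shows "(\<Sum>k<K. (cmod (cinner z (Q ((U ^^ (k + s)) \<psi>))))\<^sup>2) \<le> C\<^sup>2 * M2 * (norm z)\<^sup>2"
  using order_trans[OF sum_shift_le[where f="\<lambda>k. (cmod (cinner z (Q ((U ^^ k) \<psi>))))\<^sup>2" and K=K and s=s]
    sq_bound[OF ac M2 Ql Qb, where K="K + s" and z=z]] by simp

lemma sq_bound_shift_id:
  fixes U :: "'a::chilbert_space \<Rightarrow> 'a"
  assumes ac: "\<forall>c K. (norm (\<Sum>k<K. c k *\<^sub>C (U ^^ k) \<psi>))\<^sup>2 \<le> M2 * (\<Sum>k<K. (cmod (c k))\<^sup>2)"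
    and M2: "M2 \<ge> 0"
  shows "(\<Sum>k<K. (cmod (cinner z ((U ^^ (k + s)) \<psi>)))\<^sup>2) \<le> M2 * (norm z)\<^sup>2"
    "(\<Sum>k<K. (cmod (cinner ((U ^^ (k + s)) \<psi>) z))\<^sup>2) \<le> M2 * (norm z)\<^sup>2"
proof -
  have "clinear_op (\<lambda>x::'a. x)" by (simp add: clinear_op_def)
  from sq_bound_shift[OF ac M2 this, where C=1 and K=K and z=z and s=s]
  show 1: "(\<Sum>k<K. (cmod (cinner z ((U ^^ (k + s)) \<psi>)))\<^sup>2) \<le> M2 * (norm z)\<^sup>2" by simp
  show "(\<Sum>k<K. (cmod (cinner ((U ^^ (k + s)) \<psi>) z))\<^sup>2) \<le> M2 * (norm z)\<^sup>2"
  proof -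
    have "cmod (cinner ((U ^^ (k + s)) \<psi>) z) = cmod (cinner z ((U ^^ (k + s)) \<psi>))" for k
      using complex_mod_cnj[of "cinner z ((U ^^ (k + s)) \<psi>)"] cinner_commute[of "(U ^^ (k + s)) \<psi>" z]
      by (simp only:)
    thus ?thesis using 1 by (simp only:)
  qed
qed

lemma trace_expand:
  fixes a b :: "nat \<Rightarrow> 'a::chilbert_space"
  assumes sab: "summable (\<lambda>n. norm (a n) * norm (b n))"
    and L: "bounded_linear L"
  shows "summable (\<lambda>n. cinner (a n) x *\<^sub>C b n)"
    "L (\<Sum>n. cinner (a n) x *\<^sub>C b n) = (\<Sum>n. L (cinner (a n) x *\<^sub>C b n))"
proof -
  have "summable (\<lambda>n. norm (cinner (a n) x *\<^sub>C b n))"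
  proof (rule summable_comparison_test)
    have "norm (norm (cinner (a n) x *\<^sub>C b n)) \<le> norm x * (norm (a n) * norm (b n))" for n
    proof -
      have "norm (norm (cinner (a n) x *\<^sub>C b n)) = cmod (cinner (a n) x) * norm (b n)"
        by (simp add: norm_scaleC)
      also have "\<dots> \<le> (norm (a n) * norm x) * norm (b n)"
        by (rule mult_right_mono[OF Cauchy_Schwarz norm_ge_zero])
      also have "\<dots> = norm x * (norm (a n) * norm (b n))" by (simp only: ac_simps)
      finally show ?thesis .
    qed
    thus "\<exists>N. \<forall>n\<ge>N. norm (norm (cinner (a n) x *\<^sub>C b n)) \<le> norm x * (norm (a n) * norm (b n))"
      by blast
    show "summable (\<lambda>n. norm x * (norm (a n) * norm (b n)))" using sab by (rule summable_mult)
  qed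
  thus s: "summable (\<lambda>n. cinner (a n) x *\<^sub>C b n)" by (rule summable_norm_cancel)
  show "L (\<Sum>n. cinner (a n) x *\<^sub>C b n) = (\<Sum>n. L (cinner (a n) x *\<^sub>C b n))"
    using bounded_linear.suminf[OF L s] by simp
qed



lemma absA:
  fixes x y :: "nat \<Rightarrow> nat \<Rightarrow> complex" and S D E :: "nat \<Rightarrow> real"
  assumes xb: "\<And>n K. (\<Sum>k<K. (cmod (x n k))\<^sup>2) \<le> S n"
    and yb: "\<And>n K. (\<Sum>k<K. (cmod (y n k))\<^sup>2) \<le> D n"
    and SE: "\<And>n. S n \<le> E n"
    and sm: "summable (\<lambda>n. sqrt (E n) * sqrt (D n))"
  shows "summable (\<lambda>k. cmod (\<Sum>n. x n k * y n k))"
    "cmod (\<Sum>k. \<Sum>n. x n k * y n k) \<le> (\<Sum>n. sqrt (S n) * sqrt (D n))"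
proof -
  have S0: "S n \<ge> 0" for n using xb[of n 0] by simp
  have D0: "D n \<ge> 0" for n using yb[of n 0] by simp
  have smSD: "summable (\<lambda>n. sqrt (S n) * sqrt (D n))"
    apply (rule summable_comparison_test[OF _ sm])
    using S0 D0 SE by (auto intro!: exI[of _ 0] mult_right_mono simp: abs_mult)
  have xk: "cmod (x n k) \<le> sqrt (S n)" for n k
  proof -
    have "(cmod (x n k))\<^sup>2 \<le> (\<Sum>k'<Suc k. (cmod (x n k'))\<^sup>2)"
      by (rule member_le_sum) auto
    also have "\<dots> \<le> S n" by (rule xb)
    finally show ?thesis by (simp add: real_le_rsqrt)
  qed
  have yk: "cmod (y n k) \<le> sqrt (D n)" for n k
  proof -
    have "(cmod (y n k))\<^sup>2 \<le> (\<Sum>k'<Suc k. (cmod (y n k'))\<^sup>2)"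
      by (rule member_le_sum) auto
    also have "\<dots> \<le> D n" by (rule yb)
    finally show ?thesis by (simp add: real_le_rsqrt)
  qed
  have smk: "summable (\<lambda>n. cmod (x n k) * cmod (y n k))" for k
    apply (rule summable_comparison_test[OF _ smSD])
    using xk yk S0 by (auto intro!: exI[of _ 0] mult_mono)
  have smk': "summable (\<lambda>n. norm (x n k * y n k))" for k
    using smk[of k] by (simp add: norm_mult)
  have tk: "cmod (\<Sum>n. x n k * y n k) \<le> (\<Sum>n. cmod (x n k) * cmod (y n k))" for k
    using summable_norm[OF smk'[of k]] by (simp add: norm_mult)
  have part: "(\<Sum>k<K. cmod (\<Sum>n. x n k * y n k)) \<le> (\<Sum>n. sqrt (S n) * sqrt (D n))" for K
  proof -
    have "(\<Sum>k<K. cmod (\<Sum>n. x n k * y n k)) \<le> (\<Sum>k<K. \<Sum>n. cmod (x n k) * cmod (y n k))"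
      by (rule sum_mono) (rule tk)
    also have "\<dots> = (\<Sum>n. \<Sum>k<K. cmod (x n k) * cmod (y n k))"
      by (rule suminf_sum[symmetric]) (rule smk)
    also have "\<dots> \<le> (\<Sum>n. sqrt (S n) * sqrt (D n))"
    proof (rule suminf_le)
      fix n
      have "(\<Sum>k<K. cmod (x n k) * cmod (y n k)) = (\<Sum>k<K. \<bar>cmod (x n k)\<bar> * \<bar>cmod (y n k)\<bar>)"
        by simp
      also have "\<dots> \<le> L2_set (\<lambda>k. cmod (x n k)) {..<K} * L2_set (\<lambda>k. cmod (y n k)) {..<K}"
        by (rule L2_set_mult_ineq)
      also have "\<dots> \<le> sqrt (S n) * sqrt (D n)"
        unfolding L2_set_def using xb yb S0
        by (intro mult_mono) (auto simp: sum_nonneg)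
      finally show "(\<Sum>k<K. cmod (x n k) * cmod (y n k)) \<le> sqrt (S n) * sqrt (D n)" .
    next
      show "summable (\<lambda>n. \<Sum>k<K. cmod (x n k) * cmod (y n k))"
        by (rule summable_sum) (rule smk)
    qed (rule smSD)
    finally show ?thesis .
  qed
  show sm1: "summable (\<lambda>k. cmod (\<Sum>n. x n k * y n k))"
    by (rule summableI_nonneg_bounded[OF _ part]) simp
  have "cmod (\<Sum>k. \<Sum>n. x n k * y n k) \<le> (\<Sum>k. cmod (\<Sum>n. x n k * y n k))"
    using summable_norm[of "\<lambda>k. \<Sum>n. x n k * y n k"] sm1 by simp
  also have "\<dots> \<le> (\<Sum>n. sqrt (S n) * sqrt (D n))"
    by (rule suminf_le_const[OF sm1 part])
  finally show "cmod (\<Sum>k. \<Sum>n. x n k * y n k) \<le> (\<Sum>n. sqrt (S n) * sqrt (D n))" .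
qed

lemma limB:
  fixes S :: "'p \<Rightarrow> nat \<Rightarrow> real" and D E :: "nat \<Rightarrow> real"
  assumes lim: "\<And>n. ((\<lambda>p. S p n) \<longlongrightarrow> 0) F"
    and S0: "\<And>p n. 0 \<le> S p n" and SE: "\<And>p n. S p n \<le> E n" and D0: "\<And>n. 0 \<le> D n"
    and sm: "summable (\<lambda>n. sqrt (E n) * sqrt (D n))"
  shows "((\<lambda>p. \<Sum>n. sqrt (S p n) * sqrt (D n)) \<longlongrightarrow> 0) F"
proof (cases "F = bot")
  case True thus ?thesis by simp
next
  case False
  have l: "((\<lambda>p. sqrt (S p n) * sqrt (D n)) \<longlongrightarrow> 0) F" for n
    using tendsto_mult[OF tendsto_real_sqrt[OF lim[of n]] tendsto_const[of "sqrt (D n)"]] by simp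
  have "((\<lambda>p. \<Sum>n. sqrt (S p n) * sqrt (D n)) \<longlongrightarrow> (\<Sum>n. (0::real))) F"
    apply (rule tannerys_theorem[where M="\<lambda>n. sqrt (E n) * sqrt (D n)", THEN conjunct2, THEN conjunct2])
       apply (rule l)
      apply (rule always_eventually)
    using S0 SE D0 sm False by (auto simp: abs_mult intro!: mult_right_mono)
  thus ?thesis by simp
qed



lemma combo:
  fixes x y :: "'p \<Rightarrow> nat \<Rightarrow> nat \<Rightarrow> complex" and S :: "'p \<Rightarrow> nat \<Rightarrow> real" and D E :: "nat \<Rightarrow> real"
  assumes xb: "\<And>p n K. (\<Sum>k<K. (cmod (x p n k))\<^sup>2) \<le> S p n"
    and yb: "\<And>p n K. (\<Sum>k<K. (cmod (y p n k))\<^sup>2) \<le> D n"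
    and SE: "\<And>p n. S p n \<le> E n"
    and sm: "summable (\<lambda>n. sqrt (E n) * sqrt (D n))"
    and lim: "\<And>n. ((\<lambda>p. S p n) \<longlongrightarrow> 0) F"
  shows "(\<forall>p. summable (\<lambda>k. cmod (\<Sum>n. x p n k * y p n k)))
      \<and> ((\<lambda>p. \<Sum>k. \<Sum>n. x p n k * y p n k) \<longlongrightarrow> 0) F"
proof
  show "\<forall>p. summable (\<lambda>k. cmod (\<Sum>n. x p n k * y p n k))"
  proof
    fix p
    show "summable (\<lambda>k. cmod (\<Sum>n. x p n k * y p n k))"
      by (rule absA(1)[where x="x p" and S="S p" and y="y p" and D=D and E=E, OF xb yb SE sm])
  qed
  have S0: "0 \<le> S p n" for p n using xb[of p n 0] by simp
  have D0: "0 \<le> D n" for n using yb[of undefined n 0] by simp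
  have l0: "((\<lambda>p. \<Sum>n. sqrt (S p n) * sqrt (D n)) \<longlongrightarrow> 0) F"
    by (rule limB[OF lim S0 SE D0 sm])
  have b: "norm (\<Sum>k. \<Sum>n. x p n k * y p n k) \<le> (\<Sum>n. sqrt (S p n) * sqrt (D n))" for p
    by (rule absA(2)[where x="x p" and S="S p" and y="y p" and D=D and E=E, OF xb yb SE sm])
  have ev: "eventually (\<lambda>p. norm (\<Sum>k. \<Sum>n. x p n k * y p n k) \<le> (\<Sum>n. sqrt (S p n) * sqrt (D n))) F"
    by (rule always_eventually) (rule allI, rule b)
  show "((\<lambda>p. \<Sum>k. \<Sum>n. x p n k * y p n k) \<longlongrightarrow> 0) F"
    by (rule Lim_null_comparison[OF ev l0])
qed

lemma tail_tendsto:
  fixes f :: "nat \<Rightarrow> real"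
  assumes "summable f"
  shows "((\<lambda>t. \<Sum>k. f (k + t)) \<longlongrightarrow> 0) sequentially"
proof -
  have eq: "(\<lambda>t. \<Sum>k. f (k + t)) = (\<lambda>t. suminf f - (\<Sum>i<t. f i))"
    using suminf_split_initial_segment[OF assms] by (auto simp: algebra_simps)
  show ?thesis unfolding eq
    using tendsto_diff[OF tendsto_const[of "suminf f"] summable_LIMSEQ[OF assms]] by simp
qed

lemma sq_series:
  fixes g :: "nat \<Rightarrow> complex"
  assumes "\<And>K s. (\<Sum>k<K. (cmod (g (k + s)))\<^sup>2) \<le> E"
  shows "summable (\<lambda>k. (cmod (g k))\<^sup>2)"
    "\<And>K s. (\<Sum>k<K. (cmod (g (k + s)))\<^sup>2) \<le> (\<Sum>k. (cmod (g (k + s)))\<^sup>2)"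
    "\<And>s. (\<Sum>k. (cmod (g (k + s)))\<^sup>2) \<le> E"
    "((\<lambda>s. \<Sum>k. (cmod (g (k + s)))\<^sup>2) \<longlongrightarrow> 0) sequentially"
proof -
  have sm: "summable (\<lambda>k. (cmod (g (k + s)))\<^sup>2)" for s
    by (rule summableI_nonneg_bounded[OF _ assms]) simp
  show "summable (\<lambda>k. (cmod (g k))\<^sup>2)" using sm[of 0] by simp
  show "(\<Sum>k<K. (cmod (g (k + s)))\<^sup>2) \<le> (\<Sum>k. (cmod (g (k + s)))\<^sup>2)" for K s
    by (rule sum_le_suminf[OF sm]) auto
  show "(\<Sum>k. (cmod (g (k + s)))\<^sup>2) \<le> E" for s
    by (rule suminf_le_const[OF sm assms])
  show "((\<lambda>s. \<Sum>k. (cmod (g (k + s)))\<^sup>2) \<longlongrightarrow> 0) sequentially"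
    using tail_tendsto[of "\<lambda>k. (cmod (g k))\<^sup>2"] sm[of 0] by simp
qed

lemma sqrt_prod_eq:
  assumes "M2 \<ge> 0"
  shows "sqrt (M2 * (norm u)\<^sup>2) * sqrt (C\<^sup>2 * M2 * (norm v)\<^sup>2) = M2 * \<bar>C\<bar> * (norm v * norm u)"
  using assms by (simp add: real_sqrt_mult)



theorem lemma3p5:
  fixes U0 Y :: "'a::chilbert_space \<Rightarrow> 'a"
    and Q :: "nat \<Rightarrow> nat \<Rightarrow> 'a \<Rightarrow> 'a"
    and \<psi> :: 'a
  assumes "unitary_op U0"
    and "trace_class Y"
    and "\<forall>t s. bounded_op (Q t s)"
    and "\<exists>C. \<forall>t s x. norm (Q t s x) \<le> C * norm x"
    and "\<psi> \<in> H_ac0 U0"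
  shows "(\<forall>t s. summable (\<lambda>k. norm (cinner ((U0 ^^ (k + t)) \<psi>) (Y (Q t s ((U0 ^^ (k + s)) \<psi>))))))
       \<and> (\<forall>t s. summable (\<lambda>k. norm (cinner ((U0 ^^ (k + t)) \<psi>) (Q t s (Y ((U0 ^^ (k + s)) \<psi>))))))
       \<and> ((\<lambda>(t, s). \<Sum>k. cinner ((U0 ^^ (k + t)) \<psi>) (Y (Q t s ((U0 ^^ (k + s)) \<psi>))))
            \<longlongrightarrow> 0) (sequentially \<times>\<^sub>F sequentially)
       \<and> ((\<lambda>(t, s). \<Sum>k. cinner ((U0 ^^ (k + t)) \<psi>) (Q t s (Y ((U0 ^^ (k + s)) \<psi>))))
            \<longlongrightarrow> 0) (sequentially \<times>\<^sub>F sequentially)"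
proof -
  have lin: "clinear_op U0" and iso: "\<forall>x. norm (U0 x) = norm x"
    using assms(1) unfolding unitary_op_def by auto
  obtain M2 where M2: "M2 \<ge> 0"
    and ac: "\<forall>c K. (norm (\<Sum>k<K. c k *\<^sub>C (U0 ^^ k) \<psi>))\<^sup>2 \<le> M2 * (\<Sum>k<K. (cmod (c k))\<^sup>2)"
    using ac_bound[OF lin iso assms(5)] by blast
  obtain a b :: "nat \<Rightarrow> 'a" where sab: "summable (\<lambda>n. norm (a n) * norm (b n))"
    and Yx: "\<forall>x. Y x = (\<Sum>n. cinner (a n) x *\<^sub>C b n)"
    using assms(2) unfolding trace_class_def by blast
  have Yx': "Y x = (\<Sum>n. cinner (a n) x *\<^sub>C b n)" for x using Yx by blast
  obtain C where Cb: "\<forall>t s x. norm (Q t s x) \<le> C * norm x" using assms(4) by blast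
  have Ql: "clinear_op (Q t s)" for t s using assms(3) unfolding bounded_op_def by blast
  have Qbl: "bounded_linear (Q t s)" for t s
    using clinear_op_bounded_linear[OF Ql] Cb by blast
  let ?F = "sequentially \<times>\<^sub>F sequentially :: (nat \<times> nat) filter"
  have smE: "summable (\<lambda>n. sqrt (M2 * (norm (b n))\<^sup>2) * sqrt (C\<^sup>2 * M2 * (norm (a n))\<^sup>2))"
    unfolding sqrt_prod_eq[OF M2] using summable_mult[OF sab, of "M2 * \<bar>C\<bar>"]
    by (simp add: mult.commute)
  have smE2: "summable (\<lambda>n. sqrt (M2 * (norm (a n))\<^sup>2) * sqrt (C\<^sup>2 * M2 * (norm (b n))\<^sup>2))"
  proof -
    have sab': "summable (\<lambda>n. norm (b n) * norm (a n))" by (subst mult.commute) (rule sab)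
    show ?thesis unfolding sqrt_prod_eq[OF M2] by (rule summable_mult[OF sab'])
  qed
  define x1 where "x1 p n k = cinner ((U0 ^^ (k + fst p)) \<psi>) (b n)" for p :: "nat \<times> nat" and n k
  define y1 where "y1 p n k = cinner (a n) (Q (fst p) (snd p) ((U0 ^^ (k + snd p)) \<psi>))"
    for p :: "nat \<times> nat" and n k
  define S1 where "S1 p n = (\<Sum>k. (cmod (x1 p n k))\<^sup>2)" for p n
  have e1: "cinner ((U0 ^^ (k + t)) \<psi>) (Y (Q t s ((U0 ^^ (k + s)) \<psi>))) = (\<Sum>n. x1 (t, s) n k * y1 (t, s) n k)"
    for t s k
    unfolding Yx' x1_def y1_def
    using trace_expand(2)[OF sab bounded_linear_cinner_right]
    by (simp add: cinner_scaleC_right mult.commute)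
  have g1: "\<And>n K s'. (\<Sum>k<K. (cmod (cinner ((U0 ^^ (k + s')) \<psi>) (b n)))\<^sup>2) \<le> M2 * (norm (b n))\<^sup>2"
    using sq_bound_shift_id(2)[OF ac M2] by blast
  have c1: "(\<forall>p. summable (\<lambda>k. cmod (\<Sum>n. x1 p n k * y1 p n k)))
      \<and> ((\<lambda>p. \<Sum>k. \<Sum>n. x1 p n k * y1 p n k) \<longlongrightarrow> 0) ?F"
  proof (rule combo[where S=S1 and D="\<lambda>n. C\<^sup>2 * M2 * (norm (a n))\<^sup>2" and E="\<lambda>n. M2 * (norm (b n))\<^sup>2"])
    show "(\<Sum>k<K. (cmod (x1 p n k))\<^sup>2) \<le> S1 p n" for p n K
      unfolding x1_def S1_def using sq_series(2)[OF g1[where n=n]] by blast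
    show "(\<Sum>k<K. (cmod (y1 p n k))\<^sup>2) \<le> C\<^sup>2 * M2 * (norm (a n))\<^sup>2" for p n K
      unfolding y1_def using sq_bound_shift[OF ac M2 Ql] Cb by blast
    show "S1 p n \<le> M2 * (norm (b n))\<^sup>2" for p n
      unfolding x1_def S1_def using sq_series(3)[OF g1[where n=n]] by blast
    show "summable (\<lambda>n. sqrt (M2 * (norm (b n))\<^sup>2) * sqrt (C\<^sup>2 * M2 * (norm (a n))\<^sup>2))" by (rule smE)
    show "((\<lambda>p. S1 p n) \<longlongrightarrow> 0) ?F" for n
      unfolding S1_def x1_def
      by (rule filterlim_compose[OF sq_series(4)[OF g1[where n=n]] filterlim_fst])
  qed
  define x2 where "x2 p n k = cinner (a n) ((U0 ^^ (k + snd p)) \<psi>)" for p :: "nat \<times> nat" and n k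
  define y2 where "y2 p n k = cinner ((U0 ^^ (k + fst p)) \<psi>) (Q (fst p) (snd p) (b n))"
    for p :: "nat \<times> nat" and n k
  define S2 where "S2 p n = (\<Sum>k. (cmod (x2 p n k))\<^sup>2)" for p n
  have e2: "cinner ((U0 ^^ (k + t)) \<psi>) (Q t s (Y ((U0 ^^ (k + s)) \<psi>))) = (\<Sum>n. x2 (t, s) n k * y2 (t, s) n k)"
    for t s k
  proof -
    have bl: "bounded_linear (\<lambda>w. cinner ((U0 ^^ (k + t)) \<psi>) (Q t s w))"
      using bounded_linear_compose[OF bounded_linear_cinner_right Qbl] by blast
    show ?thesis
      unfolding Yx' x2_def y2_def
      using trace_expand(2)[OF sab bl]
      by (simp add: cinner_scaleC_right clinear_opD(2)[OF Ql])
  qed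
  have g2: "\<And>n K s'. (\<Sum>k<K. (cmod (cinner (a n) ((U0 ^^ (k + s')) \<psi>)))\<^sup>2) \<le> M2 * (norm (a n))\<^sup>2"
    using sq_bound_shift_id(1)[OF ac M2] by blast
  have c2: "(\<forall>p. summable (\<lambda>k. cmod (\<Sum>n. x2 p n k * y2 p n k)))
      \<and> ((\<lambda>p. \<Sum>k. \<Sum>n. x2 p n k * y2 p n k) \<longlongrightarrow> 0) ?F"
  proof (rule combo[where S=S2 and D="\<lambda>n. C\<^sup>2 * M2 * (norm (b n))\<^sup>2" and E="\<lambda>n. M2 * (norm (a n))\<^sup>2"])
    show "(\<Sum>k<K. (cmod (x2 p n k))\<^sup>2) \<le> S2 p n" for p n K
      unfolding x2_def S2_def using sq_series(2)[OF g2[where n=n]] by blast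
    show "(\<Sum>k<K. (cmod (y2 p n k))\<^sup>2) \<le> C\<^sup>2 * M2 * (norm (b n))\<^sup>2" for p n K
    proof -
      have "(\<Sum>k<K. (cmod (y2 p n k))\<^sup>2) \<le> M2 * (norm (Q (fst p) (snd p) (b n)))\<^sup>2"
        unfolding y2_def using sq_bound_shift_id(2)[OF ac M2] by blast
      also have "\<dots> \<le> M2 * (C * norm (b n))\<^sup>2"
        using Cb by (intro mult_left_mono[OF _ M2] power_mono) auto
      finally show ?thesis by (simp add: power_mult_distrib ac_simps)
    qed
    show "S2 p n \<le> M2 * (norm (a n))\<^sup>2" for p n
      unfolding x2_def S2_def using sq_series(3)[OF g2[where n=n]] by blast
    show "summable (\<lambda>n. sqrt (M2 * (norm (a n))\<^sup>2) * sqrt (C\<^sup>2 * M2 * (norm (b n))\<^sup>2))" by (rule smE2)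
    show "((\<lambda>p. S2 p n) \<longlongrightarrow> 0) ?F" for n
      unfolding S2_def x2_def
      by (rule filterlim_compose[OF sq_series(4)[OF g2[where n=n]] filterlim_snd])
  qed
  have f1: "(\<lambda>(t, s). \<Sum>k. cinner ((U0 ^^ (k + t)) \<psi>) (Y (Q t s ((U0 ^^ (k + s)) \<psi>))))
      = (\<lambda>p. \<Sum>k. \<Sum>n. x1 p n k * y1 p n k)"
    by (auto simp: e1)
  have f2: "(\<lambda>(t, s). \<Sum>k. cinner ((U0 ^^ (k + t)) \<psi>) (Q t s (Y ((U0 ^^ (k + s)) \<psi>))))
      = (\<lambda>p. \<Sum>k. \<Sum>n. x2 p n k * y2 p n k)"
    by (auto simp: e2)
  show ?thesis
    unfolding f1 f2
    using c1 c2 by (auto simp: e1 e2)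
qed


end
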